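(* Let $H$ be a graph labeled by $\mathrm{HL}$-types and let $p\in Pr$ be a primitive type such that $p$ is lonely in $\times(H)$ and $\times(H)$ has no skeleton subtypes. Then $\mathrm{HL}\not\vdash H\to p$.
   Context: Hypergraphs: given labels $C$ with $type:C\to\mathbb{N}$, a graph is $G=\langle V,E,att,lab,ext\rangle$ with finite $V,E$, $att:E\to V^\circledast$ (strings of distinct nodes), $lab:E\to C$ with $type(lab(e))=|att(e)|$, $ext\in V^\circledast$; $type(G)=|ext|$; isomorphic graphs identified. Handle $a^\bullet$: one edge labeled $a$ attached to $v_1\dots v_n$, all external in that order. Replacement $G[e/H]$: remove $e$, insert a disjoint copy of $H$, fuse $i$-th external node of $H$ with $i$-th attachment node of $e$; simultaneous replacement; relabeling $G[e:=a]$. $\mathrm{HL}$: primitive types $Pr$ with $type:Pr\to\mathbb{N}$ (infinitely many of each arity); symbol $\$$ of any arity. Types: primitives; $N\div D$ where $D$ has exactly one edge $d_0$ labeled $\$$, others labeled by types, $type(N)=type(D)$, $type(N\div D)=type_D(d_0)$; $\times(M)$ for a type-labeled graph $M$, $type(\times(M))=type(M)$. Subtypes of a type are the occurrences of types in its inductive construction (the type itself, and recursively the subtypes of $N$ and of the edge labels of $D$ for $N\div D$, and of the edge labels of $M$ for $\times(M)$). Graph sequent $H\to A$ with $type(H)=type(A)$. Axioms $p^\bullet\to p$. Rules: $(\div\to)$: for $N\div D$ with $E_D=\{d_0,\dots,d_k\}$, $e\in E_H$ labeled $N$: from $H\to A$, $H_i\to lab(d_i)$ infer $H[e/D][d_0:=N\div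 D][d_1/H_1,\dots,d_k/H_k]\to A$; $(\to\div)$: from $D[d_0/F]\to N$ infer $F\to N\div D$; $(\times\to)$: if $e\in E_G$ is labeled $\times(F)$, from $G[e/F]\to A$ infer $G\to A$; $(\to\times)$: with $E_M=\{m_1,\dots,m_l\}$, from $H_i\to lab(m_i)$ infer $M[m_1/H_1,\dots,m_l/H_l]\to\times(M)$. Top occurrence: a distinguished subtype occurrence $B$ is a top occurrence within $A$ if $A=B$; or $A=\times(M)$ and $B$ is a top occurrence within $lab(e_0)$ for some $e_0\in E_M$; or $A=N\div D$ and $B$ is a top occurrence within $N$. A primitive type $p$ is lonely in a type $A$ if for each top occurrence of $p$ within $A$ there is a subtype $\times(M)$ of $A$ with $|E_M|\ge 2$ and some $e_0\in E_M$ whose label $lab(e_0)=p$ is that top occurrence. A type $A$ is skeleton if $A=\times(M)$ with $E_M=\emptyset$ and $|ext_M|=|V_M|$. *)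

theory Defs
  imports Main "HOL-Library.Nat_Bijection"
begin

section \<open>Hypergraphs (concrete representatives; isomorphic graphs are identified via giso)\<close>

text \<open>A graph: a set of nodes, a list of edges (edge identity = list index), each edge
  being a pair (label, attachment string), and the string of external nodes.\<close>
datatype 'l hgraph = HG (hV: "nat set") (hE: "('l \<times> nat list) list") (hext: "nat list")

definition wf_graph :: "'l hgraph \<Rightarrow> bool" where
  "wf_graph G \<longleftrightarrow> finite (hV G) \<and> distinct (hext G) \<and> set (hext G) \<subseteq> hV G \<and>
     (\<forall>l a. (l, a) \<in> set (hE G) \<longrightarrow> distinct a \<and> set a \<subseteq> hV G)"

definition giso :: "('a \<Rightarrow> 'b \<Rightarrow> bool) \<Rightarrow> 'a hgraph \<Rightarrow> 'b hgraph \<Rightarrow> bool" where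
  "giso R G G' \<longleftrightarrow> (\<exists>f \<pi>. bij_betw f (hV G) (hV G') \<and> length (hE G) = length (hE G') \<and>
     bij_betw \<pi> {..<length (hE G)} {..<length (hE G')} \<and>
     (\<forall>i<length (hE G). R (fst (hE G ! i)) (fst (hE G' ! \<pi> i)) \<and>
         snd (hE G' ! \<pi> i) = map f (snd (hE G ! i))) \<and>
     hext G' = map f (hext G))"

lemma giso_mono[mono]: "(\<And>x y. R x y \<longrightarrow> S x y) \<Longrightarrow> giso R G G' \<longrightarrow> giso S G G'"
  unfolding giso_def by blast

definition list_idx :: "'a list \<Rightarrow> 'a \<Rightarrow> nat" where
  "list_idx xs v = (LEAST j. j < length xs \<and> xs ! j = v)"

text \<open>Simultaneous replacement: every edge i with sub i = Some H is replaced by a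
  disjoint copy of H whose j-th external node is fused with the j-th attachment node of i.\<close>
definition fresh_base :: "'l hgraph \<Rightarrow> nat" where
  "fresh_base G = Suc (Max (insert 0 (hV G)))"

definition emb :: "'l hgraph \<Rightarrow> nat \<Rightarrow> 'l hgraph \<Rightarrow> nat \<Rightarrow> nat" where
  "emb G i H v = (if v \<in> set (hext H) then snd (hE G ! i) ! list_idx (hext H) v
                  else fresh_base G + prod_encode (i, v))"

definition subst :: "'l hgraph \<Rightarrow> (nat \<Rightarrow> 'l hgraph option) \<Rightarrow> 'l hgraph" where
  "subst G sub = HG
     (hV G \<union> (\<Union>i\<in>{..<length (hE G)}. case sub i of None \<Rightarrow> {} | Some H \<Rightarrow> emb G i H ` hV H))
     (concat (map (\<lambda>i. case sub i of None \<Rightarrow> [hE G ! i]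
                    | Some H \<Rightarrow> map (\<lambda>(l, a). (l, map (emb G i H) a)) (hE H))
              [0..<length (hE G)]))
     (hext G)"

definition handle :: "'l \<Rightarrow> nat \<Rightarrow> 'l hgraph" where
  "handle l n = HG {..<n} [(l, [0..<n])] [0..<n]"

text \<open>Prim a n: the primitive type named a of arity n (infinitely many of each arity).
  In Div N D, the edge labeled None is the \$-edge.\<close>
datatype ty = Prim nat nat | Div ty "ty option hgraph" | Times "ty hgraph"

definition arity :: "ty \<Rightarrow> nat" where
  "arity A = (case A of Prim a n \<Rightarrow> n
     | Div N D \<Rightarrow> (case find (\<lambda>x. fst x = None) (hE D) of Some x \<Rightarrow> length (snd x) | None \<Rightarrow> 0)
     | Times M \<Rightarrow> length (hext M))"

inductive wf_ty :: "ty \<Rightarrow> bool" where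
  "wf_ty (Prim a n)"
| "wf_ty N \<Longrightarrow> wf_graph D \<Longrightarrow> length (filter (\<lambda>x. fst x = None) (hE D)) = 1 \<Longrightarrow>
   (\<forall>T a. (Some T, a) \<in> set (hE D) \<longrightarrow> wf_ty T \<and> arity T = length a) \<Longrightarrow>
   arity N = length (hext D) \<Longrightarrow> wf_ty (Div N D)"
| "wf_graph M \<Longrightarrow> (\<forall>T a. (T, a) \<in> set (hE M) \<longrightarrow> wf_ty T \<and> arity T = length a) \<Longrightarrow>
   wf_ty (Times M)"

definition wf_tgraph :: "ty hgraph \<Rightarrow> bool" where
  "wf_tgraph G \<longleftrightarrow> wf_graph G \<and> (\<forall>T a. (T, a) \<in> set (hE G) \<longrightarrow> wf_ty T \<and> arity T = length a)"

inductive ty_eq :: "ty \<Rightarrow> ty \<Rightarrow> bool" where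
  "ty_eq (Prim a n) (Prim a n)"
| "ty_eq N N' \<Longrightarrow> giso (rel_option ty_eq) D D' \<Longrightarrow> ty_eq (Div N D) (Div N' D')"
| "giso ty_eq M M' \<Longrightarrow> ty_eq (Times M) (Times M')"
monos option.rel_mono_strong

definition dlab :: "ty \<Rightarrow> ty option hgraph \<Rightarrow> ty hgraph" where
  "dlab N D = map_hgraph (\<lambda>x. case x of None \<Rightarrow> Div N D | Some T \<Rightarrow> T) D"

inductive HL :: "ty hgraph \<Rightarrow> ty \<Rightarrow> bool" where
  ax: "HL (handle (Prim a n) n) (Prim a n)"
| divL: "wf_ty (Div N D) \<Longrightarrow> d0 < length (hE D) \<Longrightarrow> fst (hE D ! d0) = None \<Longrightarrow>
    HL H A \<Longrightarrow> e < length (hE H) \<Longrightarrow> fst (hE H ! e) = N \<Longrightarrow>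
    (\<forall>i<length (hE D). i \<noteq> d0 \<longrightarrow> HL (Hs i) (the (fst (hE D ! i)))) \<Longrightarrow>
    HL (subst H (\<lambda>j. if j = e then
          Some (subst (dlab N D) (\<lambda>i. if i < length (hE D) \<and> i \<noteq> d0 then Some (Hs i) else None))
        else None)) A"
| divR: "wf_ty (Div N D) \<Longrightarrow> d0 < length (hE D) \<Longrightarrow> fst (hE D ! d0) = None \<Longrightarrow>
    wf_tgraph F \<Longrightarrow> length (hext F) = length (snd (hE D ! d0)) \<Longrightarrow>
    HL (subst (dlab N D) (\<lambda>j. if j = d0 then Some F else None)) N \<Longrightarrow>
    HL F (Div N D)"
| timesL: "wf_tgraph G \<Longrightarrow> e < length (hE G) \<Longrightarrow> fst (hE G ! e) = Times F \<Longrightarrow>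
    HL (subst G (\<lambda>j. if j = e then Some F else None)) A \<Longrightarrow> HL G A"
| timesR: "wf_ty (Times M) \<Longrightarrow> (\<forall>i<length (hE M). HL (Hs i) (fst (hE M ! i))) \<Longrightarrow>
    HL (subst M (\<lambda>i. if i < length (hE M) then Some (Hs i) else None)) (Times M)"
| iso: "HL G A \<Longrightarrow> giso ty_eq G G' \<Longrightarrow> ty_eq A A' \<Longrightarrow> HL G' A'"

text \<open>Positions of subtype occurrences: TE i = label of edge i of the graph of a product,
  Num = numerator of a division, DE i = label of (non-\$) edge i of the denominator.\<close>
datatype step = TE nat | Num | DE nat

fun subty :: "ty \<Rightarrow> step list \<Rightarrow> ty option" where
  "subty A [] = Some A"
| "subty (Times M) (TE i # ps) = (if i < length (hE M) then subty (fst (hE M ! i)) ps else None)"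
| "subty (Div N D) (Num # ps) = subty N ps"
| "subty (Div N D) (DE i # ps) = (if i < length (hE D) then
      (case fst (hE D ! i) of Some T \<Rightarrow> subty T ps | None \<Rightarrow> None) else None)"
| "subty _ _ = None"

definition top_pos :: "step list \<Rightarrow> bool" where
  "top_pos ps \<longleftrightarrow> (\<forall>i. DE i \<notin> set ps)"

definition lonely :: "ty \<Rightarrow> ty \<Rightarrow> bool" where
  "lonely p A \<longleftrightarrow> (\<forall>ps. top_pos ps \<and> subty A ps = Some p \<longrightarrow>
     (\<exists>qs i M. ps = qs @ [TE i] \<and> subty A qs = Some (Times M) \<and> 2 \<le> length (hE M)))"

definition skeleton :: "ty \<Rightarrow> bool" where
  "skeleton A \<longleftrightarrow> (\<exists>M. A = Times M \<and> hE M = [] \<and> card (hV M) = length (hext M))"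

end

theory Submission
  imports Defs
begin

inductive badT :: "ty \<Rightarrow> ty \<Rightarrow> bool" for p where
  b1: "badT p (Div p D)"
| b2: "badT p N \<Longrightarrow> badT p (Div N D)"
| b3: "(p, xs) \<in> set (hE M) \<Longrightarrow> length (hE M) < 2 \<Longrightarrow> badT p (Times M)"
| b4: "(L, xs) \<in> set (hE M) \<Longrightarrow> badT p L \<Longrightarrow> badT p (Times M)"

inductive subT :: "ty \<Rightarrow> ty \<Rightarrow> bool" where
  s1: "subT T T"
| s2: "subT S N \<Longrightarrow> subT S (Div N D)"
| s3: "(Some L, xs) \<in> set (hE D) \<Longrightarrow> subT S L \<Longrightarrow> subT S (Div N D)"
| s4: "(L, xs) \<in> set (hE M) \<Longrightarrow> subT S L \<Longrightarrow> subT S (Times M)"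

lemma badT_prim: "\<not> badT p (Prim a n)"
  by (auto elim: badT.cases)

lemma subT_path: "subT S T \<Longrightarrow> \<exists>ps. subty T ps = Some S"
proof (induction rule: subT.induct)
  case (s1 T)
  then show ?case by (rule exI[of _ "[]"]) simp
next
  case (s2 S N D)
  then obtain ps where "subty N ps = Some S" by blast
  then show ?case by (intro exI[of _ "Num # ps"]) simp
next
  case (s3 L xs D S N)
  then obtain ps where ps: "subty L ps = Some S" by blast
  from s3(1) obtain i where i: "i < length (hE D)" "hE D ! i = (Some L, xs)"
    by (metis in_set_conv_nth)
  show ?case using i ps by (intro exI[of _ "DE i # ps"]) simp
next
  case (s4 L xs M S)
  then obtain ps where ps: "subty L ps = Some S" by blast
  from s4(1) obtain i where i: "i < length (hE M)" "hE M ! i = (L, xs)"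
    by (metis in_set_conv_nth)
  show ?case using i ps by (intro exI[of _ "TE i # ps"]) simp
qed

lemma badT_path: "badT p T \<Longrightarrow> p = Prim a n \<Longrightarrow> \<exists>ps. top_pos ps \<and> subty T ps = Some p \<and>
   (\<forall>qs i M. ps = qs @ [TE i] \<and> subty T qs = Some (Times M) \<longrightarrow> length (hE M) < 2)"
proof (induction rule: badT.induct)
  case (b1 D)
  show ?case by (intro exI[of _ "[Num]"]) (auto simp: top_pos_def Cons_eq_append_conv)
next
  case (b2 N D)
  then obtain ps where ps: "top_pos ps" "subty N ps = Some p"
    "\<forall>qs i M. ps = qs @ [TE i] \<and> subty N qs = Some (Times M) \<longrightarrow> length (hE M) < 2" by blast
  show ?case
  proof (intro exI[of _ "Num # ps"] conjI allI impI)
    show "top_pos (Num # ps)" using ps(1) by (auto simp: top_pos_def)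
    show "subty (Div N D) (Num # ps) = Some p" using ps(2) by simp
    fix qs i M assume h: "Num # ps = qs @ [TE i] \<and> subty (Div N D) qs = Some (Times M)"
    obtain qs0 where "qs = Num # qs0" "ps = qs0 @ [TE i]"
    proof (cases qs)
      case Nil
      then show ?thesis using h by simp
    next
      case (Cons q qs0)
      then show ?thesis using h that by simp
    qed
    then show "length (hE M) < 2" using h ps(3) by auto
  qed
next
  case (b3 xs M)
  from b3(1) obtain i where i: "i < length (hE M)" "hE M ! i = (p, xs)"
    by (metis in_set_conv_nth)
  show ?case
  proof (intro exI[of _ "[TE i]"] conjI allI impI)
    show "top_pos [TE i]" by (auto simp: top_pos_def)
    show "subty (Times M) [TE i] = Some p" using i by simp
    fix qs j M' assume "[TE i] = qs @ [TE j] \<and> subty (Times M) qs = Some (Times M')"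
    then show "length (hE M') < 2" using b3(2) by (auto simp: Cons_eq_append_conv)
  qed
next
  case (b4 L xs M)
  then obtain ps where ps: "top_pos ps" "subty L ps = Some p"
    "\<forall>qs i M. ps = qs @ [TE i] \<and> subty L qs = Some (Times M) \<longrightarrow> length (hE M) < 2" by blast
  from b4(1) obtain i where i: "i < length (hE M)" "hE M ! i = (L, xs)"
    by (metis in_set_conv_nth)
  have "ps \<noteq> []"
  proof
    assume "ps = []"
    then have "L = p" using ps(2) by simp
    then show False using b4(2) b4(4) badT_prim by simp
  qed
  show ?case
  proof (intro exI[of _ "TE i # ps"] conjI allI impI)
    show "top_pos (TE i # ps)" using ps(1) by (auto simp: top_pos_def)
    show "subty (Times M) (TE i # ps) = Some p" using ps(2) i by simp
    fix qs j M' assume h: "TE i # ps = qs @ [TE j] \<and> subty (Times M) qs = Some (Times M')"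
    obtain qs0 where "qs = TE i # qs0" "ps = qs0 @ [TE j]"
    proof (cases qs)
      case Nil
      then show ?thesis using h \<open>ps \<noteq> []\<close> by simp
    next
      case (Cons q qs0)
      then show ?thesis using h that by simp
    qed
    then show "length (hE M') < 2" using h ps(3) i by auto
  qed
qed

lemma badT_not_lonely: "badT (Prim a n) T \<Longrightarrow> \<not> lonely (Prim a n) T"
  using badT_path[of "Prim a n" T a n] unfolding lonely_def by fastforce

lemma giso_edge: "giso R M M' \<Longrightarrow> (L, xs) \<in> set (hE M) \<Longrightarrow> \<exists>L' ys. (L', ys) \<in> set (hE M') \<and> R L L'"
proof -
  assume g: "giso R M M'" and m: "(L, xs) \<in> set (hE M)"
  from g obtain f \<pi> where h: "length (hE M) = length (hE M')"
    "bij_betw \<pi> {..<length (hE M)} {..<length (hE M')}"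
    "\<forall>i<length (hE M). R (fst (hE M ! i)) (fst (hE M' ! \<pi> i))"
    unfolding giso_def by blast
  from m obtain i where i: "i < length (hE M)" "hE M ! i = (L, xs)" by (metis in_set_conv_nth)
  have "\<pi> i < length (hE M')" using h(2) i(1) by (auto simp: bij_betw_def)
  then show ?thesis using h(3) i
    by (metis fst_conv nth_mem prod.collapse)
qed

lemma ty_eq_Prim: "ty_eq (Prim a n) T \<Longrightarrow> T = Prim a n"
  by (erule ty_eq.cases) auto

lemma ty_eq_Prim2: "ty_eq T (Prim a n) \<Longrightarrow> T = Prim a n"
  by (erule ty_eq.cases) auto

lemma ty_eq_DivE: "ty_eq (Div N D) T \<Longrightarrow> (\<And>N' D'. T = Div N' D' \<Longrightarrow> ty_eq N N' \<Longrightarrow> giso (rel_option ty_eq) D D' \<Longrightarrow> P) \<Longrightarrow> P"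
  by (erule ty_eq.cases) auto

lemma ty_eq_TimesE: "ty_eq (Times M) T \<Longrightarrow> (\<And>M'. T = Times M' \<Longrightarrow> giso ty_eq M M' \<Longrightarrow> P) \<Longrightarrow> P"
  by (erule ty_eq.cases) auto

lemma giso_len: "giso R M M' \<Longrightarrow> length (hE M) = length (hE M')"
  unfolding giso_def by blast

lemma badT_ty_eq: "badT (Prim a n) T \<Longrightarrow> ty_eq T T' \<Longrightarrow> badT (Prim a n) T'"
proof (induction arbitrary: T' rule: badT.induct)
  case (b1 D)
  from b1 show ?case
  proof (rule ty_eq_DivE)
    fix N' D' assume "T' = Div N' D'" "ty_eq (Prim a n) N'"
    then show ?case using ty_eq_Prim[of a n N'] badT.b1[of "Prim a n" D'] by simp
  qed
next
  case (b2 N D)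
  from b2(3) show ?case
  proof (rule ty_eq_DivE)
    fix N' D' assume "T' = Div N' D'" "ty_eq N N'"
    then show ?case using b2(2)[of N'] badT.b2[of "Prim a n" N' D'] by simp
  qed
next
  case (b3 xs M)
  from b3(3) show ?case
  proof (rule ty_eq_TimesE)
    fix M' assume T': "T' = Times M'" "giso ty_eq M M'"
    obtain L' ys where "(L', ys) \<in> set (hE M')" "ty_eq (Prim a n) L'"
      using giso_edge[OF T'(2) b3(1)] by blast
    moreover have "length (hE M') = length (hE M)" using giso_len[OF T'(2)] by simp
    ultimately show ?case using T' b3(2) ty_eq_Prim badT.b3 by metis
  qed
next
  case (b4 L xs M)
  from b4(4) show ?case
  proof (rule ty_eq_TimesE)
    fix M' assume T': "T' = Times M'" "giso ty_eq M M'"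
    obtain L' ys where "(L', ys) \<in> set (hE M')" "ty_eq L L'"
      using giso_edge[OF T'(2) b4(1)] by blast
    then show ?case using T' b4(3) badT.b4 by metis
  qed
qed

lemma subT_ty_eq: "subT S T \<Longrightarrow> ty_eq T T' \<Longrightarrow> \<exists>S'. subT S' T' \<and> ty_eq S S'"
proof (induction arbitrary: T' rule: subT.induct)
  case (s1 T)
  then show ?case using subT.s1 by blast
next
  case (s2 S N D)
  from s2(3) show ?case
  proof (rule ty_eq_DivE)
    fix N' D' assume T': "T' = Div N' D'" "ty_eq N N'"
    obtain S' where "subT S' N'" "ty_eq S S'" using s2(2)[OF T'(2)] by blast
    then show ?case using T'(1) subT.s2[of S' N' D'] by blast
  qed
next
  case (s3 L xs D S N)
  from s3(4) show ?case
  proof (rule ty_eq_DivE)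
    fix N' D' assume T': "T' = Div N' D'" "giso (rel_option ty_eq) D D'"
    obtain x ys where x: "(x, ys) \<in> set (hE D')" "rel_option ty_eq (Some L) x"
      using giso_edge[OF T'(2) s3(1)] by blast
    then obtain L' where L': "x = Some L'" "ty_eq L L'" by (cases x) auto
    obtain S' where "subT S' L'" "ty_eq S S'" using s3(3)[OF L'(2)] by blast
    then show ?case using T'(1) x(1) L'(1) subT.s3[of L' ys D' S' N'] by blast
  qed
next
  case (s4 L xs M S)
  from s4(4) show ?case
  proof (rule ty_eq_TimesE)
    fix M' assume T': "T' = Times M'" "giso ty_eq M M'"
    obtain L' ys where L': "(L', ys) \<in> set (hE M')" "ty_eq L L'"
      using giso_edge[OF T'(2) s4(1)] by blast
    obtain S' where "subT S' L'" "ty_eq S S'" using s4(3)[OF L'(2)] by blast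
    then show ?case using T'(1) L'(1) subT.s4[of L' ys M' S'] by blast
  qed
qed

lemma skel_ty_eq: "skeleton S \<Longrightarrow> ty_eq S S' \<Longrightarrow> skeleton S'"
proof -
  assume "skeleton S" "ty_eq S S'"
  then obtain M M' where M: "S = Times M" "hE M = []" "card (hV M) = length (hext M)" "S' = Times M'"
     "giso ty_eq M M'"
    unfolding skeleton_def by (auto elim: ty_eq_TimesE)
  then obtain f where f: "bij_betw f (hV M) (hV M')" "length (hE M) = length (hE M')" "hext M' = map f (hext M)"
    unfolding giso_def by blast
  have "card (hV M') = card (hV M)" using f(1) by (simp add: bij_betw_same_card)
  then show ?thesis using M f unfolding skeleton_def by auto
qed

definition NS :: "ty hgraph \<Rightarrow> bool" where
  "NS G \<longleftrightarrow> (\<forall>x \<in> set (hE G). \<forall>S. \<not> (subT S (fst x) \<and> skeleton S))"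

definition badG :: "ty \<Rightarrow> ty hgraph \<Rightarrow> bool" where
  "badG p G \<longleftrightarrow> (\<exists>x \<in> set (hE G). badT p (fst x))"

definition hlike :: "ty \<Rightarrow> ty hgraph \<Rightarrow> bool" where
  "hlike p G \<longleftrightarrow> (\<exists>xs. hE G = [(p, xs)] \<and> hV G = set xs)"

lemma subst_edgeD:
  assumes "x \<in> set (hE (subst G sub))"
  shows "\<exists>i<length (hE G). (sub i = None \<and> x = hE G ! i) \<or>
           (\<exists>K ys. sub i = Some K \<and> (fst x, ys) \<in> set (hE K))"
proof -
  let ?f = "\<lambda>i. case sub i of None \<Rightarrow> [hE G ! i]
                    | Some H \<Rightarrow> map (\<lambda>(l, a). (l, map (emb G i H) a)) (hE H)"
  have "x \<in> set (concat (map ?f [0..<length (hE G)]))"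
    using assms unfolding subst_def hgraph.sel .
  then obtain i where i0: "i \<in> set [0..<length (hE G)]" and i: "x \<in> set (?f i)"
    unfolding set_concat set_map by blast
  from i0 have il: "i < length (hE G)" by simp
  show ?thesis
  proof (cases "sub i")
    case None
    then have "x = hE G ! i" using i by simp
    then show ?thesis using il None by blast
  next
    case (Some K)
    then have "x \<in> set (map (\<lambda>(l, a). (l, map (emb G i K) a)) (hE K))" using i by simp
    then obtain l a where la: "(l, a) \<in> set (hE K)" "x = (l, map (emb G i K) a)" by auto
    then have "(fst x, a) \<in> set (hE K)" by simp
    then show ?thesis using il Some by blast
  qed
qed

lemma subst_edge_mem:
  assumes "i < length (hE G)"
    "x \<in> set (case sub i of None \<Rightarrow> [hE G ! i]
                    | Some H \<Rightarrow> map (\<lambda>(l, a). (l, map (emb G i H) a)) (hE H))"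
  shows "x \<in> set (hE (subst G sub))"
proof -
  have "i \<in> set [0..<length (hE G)]" using assms(1) by simp
  then show ?thesis using assms(2) unfolding subst_def hgraph.sel set_concat set_map by blast
qed

lemma subst_edge_None:
  "i < length (hE G) \<Longrightarrow> sub i = None \<Longrightarrow> hE G ! i \<in> set (hE (subst G sub))"
  by (rule subst_edge_mem) auto

lemma subst_edge_Some:
  assumes "i < length (hE G)" "sub i = Some K" "(L, xs) \<in> set (hE K)"
  shows "\<exists>ys. (L, ys) \<in> set (hE (subst G sub))"
proof -
  have "(L, map (emb G i K) xs) \<in> set (map (\<lambda>(l, a). (l, map (emb G i K) a)) (hE K))"
    using assms(3) by force
  then have "(L, map (emb G i K) xs) \<in> set (hE (subst G sub))"
    using assms(1,2) by (intro subst_edge_mem) auto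
  then show ?thesis by blast
qed

lemma len_concat_mem: "i \<in> set xs \<Longrightarrow> length (f i) \<le> length (concat (map f xs))"
  by (induction xs) auto

lemma subst_len:
  assumes "i < length (hE G)" "sub i = Some K"
  shows "length (hE K) \<le> length (hE (subst G sub))"
proof -
  let ?f = "\<lambda>i. case sub i of None \<Rightarrow> [hE G ! i]
                    | Some H \<Rightarrow> map (\<lambda>(l, a). (l, map (emb G i H) a)) (hE H)"
  have "length (?f i) \<le> length (concat (map ?f [0..<length (hE G)]))"
    by (rule len_concat_mem) (use assms(1) in simp)
  moreover have "length (?f i) = length (hE K)" using assms(2) by simp
  ultimately have "length (hE K) \<le> length (concat (map ?f [0..<length (hE G)]))" by linarith
  then show ?thesis unfolding subst_def hgraph.sel .
qed

lemma subst_V: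
  assumes "i < length (hE G)" "sub i = Some K"
  shows "emb G i K ` hV K \<subseteq> hV (subst G sub)"
proof -
  have "emb G i K ` hV K = (case sub i of None \<Rightarrow> {} | Some H \<Rightarrow> emb G i H ` hV H)"
    using assms(2) by simp
  then show ?thesis using assms(1) unfolding subst_def hgraph.sel by blast
qed
lemma fresh_notin: "finite (hV G) \<Longrightarrow> fresh_base G + k \<notin> hV G"
proof
  assume "finite (hV G)" "fresh_base G + k \<in> hV G"
  then have "fresh_base G + k \<le> Max (insert 0 (hV G))" by (intro Max_ge) auto
  then show False unfolding fresh_base_def by linarith
qed

lemma hlike_iso:
  assumes g: "giso ty_eq G G'" and h: "hlike (Prim a n) G"
  shows "hlike (Prim a n) G'"
proof -
  from h obtain xs where xs: "hE G = [(Prim a n, xs)]" "hV G = set xs" unfolding hlike_def by blast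
  from g obtain f \<pi> where gi: "bij_betw f (hV G) (hV G')" "length (hE G) = length (hE G')"
     "bij_betw \<pi> {..<length (hE G)} {..<length (hE G')}"
     "\<forall>i<length (hE G). ty_eq (fst (hE G ! i)) (fst (hE G' ! \<pi> i)) \<and>
         snd (hE G' ! \<pi> i) = map f (snd (hE G ! i))"
    unfolding giso_def by blast
  have l1: "length (hE G') = 1" using gi(2) xs(1) by simp
  have "\<pi> 0 < 1" using gi(3) xs(1) l1 by (auto simp: bij_betw_def)
  then have p0: "\<pi> 0 = 0" by simp
  have "ty_eq (Prim a n) (fst (hE G' ! 0))" "snd (hE G' ! 0) = map f xs"
    using gi(4) xs(1) p0 by auto
  then have e0: "hE G' ! 0 = (Prim a n, map f xs)" using ty_eq_Prim by (metis prod.collapse)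
  have "hE G' = [hE G' ! 0]" using l1 by (cases "hE G'") auto
  then have "hE G' = [(Prim a n, map f xs)]" using e0 by simp
  moreover have "hV G' = set (map f xs)" using gi(1) xs(2) by (simp add: bij_betw_def)
  ultimately show ?thesis unfolding hlike_def by blast
qed

lemma badG_iso: "giso ty_eq G G' \<Longrightarrow> badG (Prim a n) G \<Longrightarrow> badG (Prim a n) G'"
proof -
  assume g: "giso ty_eq G G'" and "badG (Prim a n) G"
  then obtain L xs where x: "(L, xs) \<in> set (hE G)" "badT (Prim a n) L" unfolding badG_def by auto
  then obtain L' ys where "(L', ys) \<in> set (hE G')" "ty_eq L L'" using giso_edge[OF g] by blast
  moreover have "badT (Prim a n) L'" using badT_ty_eq x(2) \<open>ty_eq L L'\<close> by blast
  ultimately show ?thesis unfolding badG_def by (intro bexI[of _ "(L', ys)"]) auto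
qed

lemma NS_iso:
  assumes g: "giso ty_eq G G'" and ns0: "NS G'"
  shows "NS G"
  unfolding NS_def
proof (intro ballI allI notI)
  fix x S
  have ns: "\<forall>x\<in>set (hE G'). \<forall>S. \<not> (subT S (fst x) \<and> skeleton S)" using ns0 unfolding NS_def .
  assume x: "x \<in> set (hE G)" and sk: "subT S (fst x) \<and> skeleton S"
  obtain L' ys where L': "(L', ys) \<in> set (hE G')" "ty_eq (fst x) L'"
    using giso_edge[OF g, of "fst x" "snd x"] x by auto
  obtain S' where "subT S' L'" "ty_eq S S'" using subT_ty_eq sk L'(2) by blast
  then show False using ns L'(1) sk skel_ty_eq by fastforce
qed

lemma wf_ty_TimesD: "wf_ty (Times F) \<Longrightarrow> wf_graph F"
  by (erule wf_ty.cases) auto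

lemma main:
  "HL G A \<Longrightarrow> A = Prim a n \<Longrightarrow> NS G \<Longrightarrow> hlike (Prim a n) G \<or> badG (Prim a n) G"
proof (induction rule: HL.induct)
  case (ax a' n')
  then show ?case unfolding hlike_def handle_def by auto
next
  case (divL N D d0 H A e Hs)
  let ?sub2 = "\<lambda>i. if i < length (hE D) \<and> i \<noteq> d0 then Some (Hs i) else None"
  let ?K = "subst (dlab N D) ?sub2"
  let ?sub1 = "\<lambda>j. if j = e then Some ?K else None"
  let ?G = "subst H ?sub1"
  have hd: "hE (dlab N D) = map (map_prod (\<lambda>x. case x of None \<Rightarrow> Div N D | Some T \<Rightarrow> T) id) (hE D)"
    unfolding dlab_def by (rule hgraph.map_sel)
  have d0l: "d0 < length (hE (dlab N D))" using hd divL.hyps(2) by simp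
  obtain y where y: "hE D ! d0 = (None, y)" using divL.hyps(3) by (cases "hE D ! d0") auto
  have hdd: "hE (dlab N D) ! d0 = (Div N D, y)" using hd divL.hyps(2) y by simp
  have "?sub2 d0 = None" by simp
  from subst_edge_None[of d0 "dlab N D" ?sub2, OF d0l this] hdd have mem: "(Div N D, y) \<in> set (hE ?K)" by simp
  have "?sub1 e = Some ?K" by simp
  from subst_edge_Some[of e H ?sub1 ?K "Div N D" y, OF divL.hyps(5) this mem] obtain ys where dv: "(Div N D, ys) \<in> set (hE ?G)"
    by blast
  have oth: "hE H ! i \<in> set (hE ?G)" if "i < length (hE H)" "i \<noteq> e" for i
    by (rule subst_edge_None) (use that in simp_all)
  have nsG: "NS ?G" using divL.prems(2) .
  have "NS H"
    unfolding NS_def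
  proof (intro ballI allI notI)
    fix x S assume x: "x \<in> set (hE H)" and sk: "subT S (fst x) \<and> skeleton S"
    then obtain i where i: "i < length (hE H)" "x = hE H ! i" by (metis in_set_conv_nth)
    show False
    proof (cases "i = e")
      case True
      then have "subT S (Div N D)" using sk i divL.hyps(6) subT.s2 by auto
      then show False using nsG dv sk unfolding NS_def by fastforce
    next
      case False
      then show False using nsG oth[OF i(1) False] sk i(2) unfolding NS_def by blast
    qed
  qed
  then have ih: "hlike (Prim a n) H \<or> badG (Prim a n) H" using divL.IH(1) divL.prems(1) by blast
  have "badG (Prim a n) ?G"
  proof (cases "hlike (Prim a n) H")
    case True
    then obtain xs where "hE H = [(Prim a n, xs)]" unfolding hlike_def by blast
    then have "N = Prim a n" using divL.hyps(5,6) by simp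
    then have "badT (Prim a n) (Div N D)" using badT.b1 by simp
    then show ?thesis using dv unfolding badG_def by force
  next
    case False
    then obtain x where x: "x \<in> set (hE H)" "badT (Prim a n) (fst x)" using ih unfolding badG_def by blast
    then obtain i where i: "i < length (hE H)" "x = hE H ! i" by (metis in_set_conv_nth)
    show ?thesis
    proof (cases "i = e")
      case True
      then have "badT (Prim a n) (Div N D)" using x i divL.hyps(6) badT.b2 by auto
      then show ?thesis using dv unfolding badG_def by force
    next
      case False
      then show ?thesis using oth[OF i(1) False] x i unfolding badG_def by blast
    qed
  qed
  then show ?case by blast
next
  case (divR N D d0 F)
  then show ?case by simp
next
  case (timesL G e F A)
  let ?sub = "\<lambda>j. if j = e then Some F else None"
  let ?G' = "subst G ?sub"
  have eG: "(Times F, snd (hE G ! e)) \<in> set (hE G)" using timesL.hyps(2,3)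
    by (metis nth_mem prod.collapse)
  have nsG: "NS G" using timesL.prems(2) .
  have src: "(\<exists>i<length (hE G). i \<noteq> e \<and> x = hE G ! i) \<or> (\<exists>ys. (fst x, ys) \<in> set (hE F))"
    if "x \<in> set (hE ?G')" for x
    using subst_edgeD[OF that] by (auto split: if_splits)
  have "NS ?G'"
    unfolding NS_def
  proof (intro ballI allI notI)
    fix x S assume x: "x \<in> set (hE ?G')" and sk: "subT S (fst x) \<and> skeleton S"
    from src[OF x] show False
    proof
      assume "\<exists>i<length (hE G). i \<noteq> e \<and> x = hE G ! i"
      then have "x \<in> set (hE G)" by auto
      then show False using nsG sk unfolding NS_def by blast
    next
      assume "\<exists>ys. (fst x, ys) \<in> set (hE F)"
      then obtain ys where "(fst x, ys) \<in> set (hE F)" by blast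
      then have "subT S (Times F)" using sk subT.s4 by blast
      then show False using nsG sk eG unfolding NS_def by fastforce
    qed
  qed
  then have ih: "hlike (Prim a n) ?G' \<or> badG (Prim a n) ?G'" using timesL.IH timesL.prems(1) by blast
  have wfG: "wf_graph G" and wfF: "wf_graph F"
    using timesL.hyps(1) eG wf_ty_TimesD unfolding wf_tgraph_def by blast+
  show ?case
  proof (cases "hlike (Prim a n) ?G'")
    case True
    then obtain xs where xs: "hE ?G' = [(Prim a n, xs)]" "hV ?G' = set xs" unfolding hlike_def by blast
    show ?thesis
    proof (cases "hE F = []")
      case True
      have "hV F \<subseteq> set (hext F)"
      proof
        fix v assume v: "v \<in> hV F"
        show "v \<in> set (hext F)"
        proof (rule ccontr)
          assume nv: "v \<notin> set (hext F)"
          have "emb G e F v \<in> hV ?G'" using subst_V[of e G ?sub F] timesL.hyps(2) v by auto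
          then have ev: "fresh_base G + prod_encode (e, v) \<in> set xs" using nv xs(2) unfolding emb_def by simp
          have "(Prim a n, xs) \<in> set (hE ?G')" using xs(1) by simp
          from src[OF this] True obtain i where "i < length (hE G)" "(Prim a n, xs) = hE G ! i" by auto
          then have "(Prim a n, xs) \<in> set (hE G)" by (metis nth_mem)
          then have "set xs \<subseteq> hV G" using wfG unfolding wf_graph_def by blast
          then show False using ev fresh_notin wfG unfolding wf_graph_def by blast
        qed
      qed
      then have "hV F = set (hext F)" using wfF unfolding wf_graph_def by blast
      then have "card (hV F) = length (hext F)" using wfF distinct_card unfolding wf_graph_def by metis
      then have "skeleton (Times F)" using True unfolding skeleton_def by simp
      then show ?thesis using nsG eG subT.s1 unfolding NS_def by fastforce
    next
      case False
      then obtain L zs where Lz: "(L, zs) \<in> set (hE F)" by (metis list.set_intros(1) neq_Nil_conv prod.collapse)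
      then obtain ys where "(L, ys) \<in> set (hE ?G')" using subst_edge_Some[of e G ?sub F L zs] timesL.hyps(2) by auto
      then have "L = Prim a n" using xs(1) by simp
      moreover have "length (hE F) \<le> length (hE ?G')" using subst_len[of e G ?sub F] timesL.hyps(2) by auto
      ultimately have "badT (Prim a n) (Times F)" using Lz xs(1) badT.b3 by fastforce
      then show ?thesis using eG unfolding badG_def by force
    qed
  next
    case False
    then obtain x where x: "x \<in> set (hE ?G')" "badT (Prim a n) (fst x)" using ih unfolding badG_def by blast
    from src[OF x(1)] show ?thesis
    proof
      assume "\<exists>i<length (hE G). i \<noteq> e \<and> x = hE G ! i"
      then have "x \<in> set (hE G)" by auto
      then show ?thesis using x(2) unfolding badG_def by blast
    next
      assume "\<exists>ys. (fst x, ys) \<in> set (hE F)"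
      then obtain ys where "(fst x, ys) \<in> set (hE F)" by blast
      then have "badT (Prim a n) (Times F)" using x(2) badT.b4 by blast
      then show ?thesis using eG unfolding badG_def by force
    qed
  qed
next
  case (timesR M Hs)
  then show ?case by simp
next
  case (iso G A G' A')
  have "A = Prim a n" using iso.prems(1) iso.hyps(3) ty_eq_Prim2 by blast
  moreover have "NS G" using NS_iso iso.hyps(2) iso.prems(2) by blast
  ultimately have "hlike (Prim a n) G \<or> badG (Prim a n) G" using iso.IH by blast
  then show ?case using hlike_iso badG_iso iso.hyps(2) by blast
qed

theorem lemma1:
  fixes H :: "ty hgraph" and a n :: nat
  assumes "wf_ty (Times H)"
    and "lonely (Prim a n) (Times H)"
    and "\<forall>ps T. subty (Times H) ps = Some T \<longrightarrow> \<not> skeleton T"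
  shows "\<not> HL H (Prim a n)"
proof
  assume hl: "HL H (Prim a n)"
  have "NS H"
    unfolding NS_def
  proof (intro ballI allI notI)
    fix x S assume x: "x \<in> set (hE H)" and sk: "subT S (fst x) \<and> skeleton S"
    then have "(fst x, snd x) \<in> set (hE H)" by simp
    then have "subT S (Times H)" using sk subT.s4 by blast
    then obtain ps where "subty (Times H) ps = Some S" using subT_path by blast
    then show False using assms(3) sk by blast
  qed
  then have "hlike (Prim a n) H \<or> badG (Prim a n) H" using main hl by blast
  then have "badT (Prim a n) (Times H)"
  proof
    assume "hlike (Prim a n) H"
    then obtain xs where "hE H = [(Prim a n, xs)]" unfolding hlike_def by blast
    then show ?thesis using badT.b3[of "Prim a n" xs H] by simp
  next
    assume "badG (Prim a n) H"
    then obtain x where "x \<in> set (hE H)" "badT (Prim a n) (fst x)" unfolding badG_def by blast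
    moreover have "(fst x, snd x) \<in> set (hE H)" using \<open>x \<in> set (hE H)\<close> by simp
    ultimately show ?thesis using badT.b4 by blast
  qed
  then show False using badT_not_lonely assms(2) by blast
qed

end
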